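(* Let $\Omega=[0,1]^d$ and let $\mathbb{P}$ be a probability measure for a pair $(X,Y)$ with $X\in\Omega$ and $Y\in\{0,1\}$. Let $T$ and $T'$ be two classification trees on $\Omega$, each having $k$ leaf nodes; denote the leaf nodes of $T$ by $A_1,\dots,A_k$ and those of $T'$ by $A_1',\dots,A_k'$. If for some $\epsilon\ge 0$ $$\sup_{1\le j\le k}\mathbb{P}(A_j\,\triangle\,A_j')\le \epsilon,$$ then $$|I(T,\mathbb{P})-I(T',\mathbb{P})|\le 5k\epsilon .$$
   Context: A classification tree on $\Omega$ is obtained by recursively splitting $\Omega$ with axis-aligned cuts $\{X[j]\le z\}$ / $\{X[j]>z\}$; its leaf nodes are hyperrectangles forming a partition of $\Omega$. For a set $A\subset\Omega$, $\mathbb{P}(A)$ denotes $\mathbb{P}(X\in A)$, $\triangle$ denotes symmetric set difference, and $\eta(A)=\mathbb{E}_{\mathbb{P}}(Y\mid X\in A)$. The (Gini) impurity of a node $A$ is $I(A,\mathbb{P})=2\eta(A)(1-\eta(A))$, and the impurity of a tree $T$ with leaf nodes $A_1,\dots,A_k$ is $I(T,\mathbb{P})=\sum_{l=1}^k \mathbb{P}(A_l)\,I(A_l,\mathbb{P})$ (a leaf with $\mathbb{P}(A_l)=0$ contributes $0$). *)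

theory Defs
  imports "HOL-Probability.Probability"
begin

text \<open>The unit cube Omega = [0,1]^d, with d = CARD('d).\<close>
definition Omega :: "(real ^ 'd) set" where
  "Omega = {x. \<forall>i. 0 \<le> x $ i \<and> x $ i \<le> 1}"

text \<open>Classification trees: a leaf, or an axis-aligned split on coordinate j at threshold z
  (left child: X[j] <= z, right child: X[j] > z).\<close>
datatype 'd ctree = Leaf | Split 'd real "'d ctree" "'d ctree"

fun leaves :: "'d ctree \<Rightarrow> (real ^ 'd) set \<Rightarrow> (real ^ 'd) set list" where
  "leaves Leaf R = [R]"
| "leaves (Split j z l r) R =
     leaves l (R \<inter> {x. x $ j \<le> z}) @ leaves r (R \<inter> {x. x $ j > z})"

definition PX :: "'w measure \<Rightarrow> ('w \<Rightarrow> real ^ 'd) \<Rightarrow> (real ^ 'd) set \<Rightarrow> real" where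
  "PX M X A = measure M {w \<in> space M. X w \<in> A}"

text \<open>eta(A) = E(Y | X in A) (taken to be 0 when P(A) = 0).\<close>
definition eta :: "'w measure \<Rightarrow> ('w \<Rightarrow> real ^ 'd) \<Rightarrow> ('w \<Rightarrow> real) \<Rightarrow> (real ^ 'd) set \<Rightarrow> real" where
  "eta M X Y A = (\<integral>w. indicator {w \<in> space M. X w \<in> A} w * Y w \<partial>M) / PX M X A"

definition node_impurity :: "'w measure \<Rightarrow> ('w \<Rightarrow> real ^ 'd) \<Rightarrow> ('w \<Rightarrow> real) \<Rightarrow> (real ^ 'd) set \<Rightarrow> real" where
  "node_impurity M X Y A = 2 * eta M X Y A * (1 - eta M X Y A)"

definition tree_impurity :: "'w measure \<Rightarrow> ('w \<Rightarrow> real ^ 'd) \<Rightarrow> ('w \<Rightarrow> real) \<Rightarrow> 'd ctree \<Rightarrow> real" where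
  "tree_impurity M X Y T =
     sum_list (map (\<lambda>A. PX M X A * node_impurity M X Y A) (leaves T Omega))"

definition symdiff :: "'a set \<Rightarrow> 'a set \<Rightarrow> 'a set" where
  "symdiff A B = (A - B) \<union> (B - A)"

end

theory Submission
  imports Defs
begin

lemma gkey:
  fixes p q d r :: real
  assumes "0 \<le> q" "q \<le> p" "0 \<le> r" "r \<le> d"
  shows "abs (2*(q+r)*((p+d)-(q+r))/(p+d) - 2*q*(p-q)/p) \<le> 2*d"
proof (cases "p = 0")
  case True
  then have q: "q = 0" using assms by simp
  show ?thesis
  proof (cases "d = 0")
    case True then show ?thesis using q \<open>p=0\<close> assms by simp
  next
    case False
    then have "d > 0" using assms by simp
    have "r*(d-r) \<le> d*d" using assms by (smt (verit) mult_mono mult_nonneg_nonneg)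
    then have "0 \<le> 2*r*(d-r)/d" "2*r*(d-r)/d \<le> 2*d" using assms \<open>d>0\<close> by (auto simp: divide_simps)
    then show ?thesis using q \<open>p=0\<close> by simp
  qed
next
  case False
  then have p: "p > 0" using assms by simp
  have d: "p + d > 0" using p assms by simp
  have key: "p*((q+r)*((p+d)-(q+r))) - (p+d)*(q*(p-q)) = r*(p-q)^2 + (d-r)*q^2 + p*r*(d-r)"
    by (simp add: algebra_simps power2_eq_square)
  have nn: "0 \<le> r*(p-q)^2 + (d-r)*q^2 + p*r*(d-r)" using assms p by simp
  have key2: "d*p*(p+d) - (r*(p-q)^2 + (d-r)*q^2 + p*r*(d-r)) = (d-r)*(p*p - q*q) + r*(p*r + 2*p*q - q*q) + p*d*(d-r)"
    by (simp add: algebra_simps power2_eq_square)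
  have n1: "0 \<le> (d-r)*(p*p - q*q)" using assms by (intro mult_nonneg_nonneg) (auto intro: mult_mono)
  have "q*q \<le> p*q" using assms by (intro mult_right_mono) auto
  moreover have "0 \<le> p*r" "0 \<le> p*q" using assms p by auto
  ultimately have "0 \<le> p*r + 2*p*q - q*q" by linarith
  then have n2: "0 \<le> r*(p*r + 2*p*q - q*q)" using assms by simp
  have n3: "0 \<le> p*d*(d-r)" using assms p by simp
  define u where "u = q*(p-q)"
  define v where "v = (q+r)*((p+d)-(q+r))"
  have lo: "u/p \<le> v/(p+d)"
    using p d key nn unfolding u_def[symmetric] v_def[symmetric] by (simp add: divide_simps algebra_simps)
  have hi: "v/(p+d) \<le> u/p + d"
    using p d key key2 nn n1 n2 n3 unfolding u_def[symmetric] v_def[symmetric] by (simp add: divide_simps algebra_simps)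
  have e1: "2*(q+r)*((p+d)-(q+r))/(p+d) = 2*(v/(p+d))" unfolding v_def by simp
  have e2: "2*q*(p-q)/p = 2*(u/p)" unfolding u_def by simp
  show ?thesis unfolding e1 e2 using lo hi by linarith
qed

lemma leaves_borel:
  fixes t :: "'d::finite ctree"
  shows "R \<in> sets borel \<Longrightarrow> B \<in> set (leaves t R) \<Longrightarrow> B \<in> sets borel"
proof (induction t arbitrary: R)
  case Leaf then show ?case by simp
next
  case (Split j z l r)
  have h1: "{x::real^'d. x $ j \<le> z} \<in> sets borel"
    by (intro borel_closed closed_Collect_le continuous_intros)
  have h2: "{x::real^'d. x $ j > z} \<in> sets borel"
    by (intro borel_open open_Collect_less continuous_intros)
  have r1: "R \<inter> {x. x $ j \<le> z} \<in> sets borel" using Split.prems(1) h1 by (rule sets.Int)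
  have r2: "R \<inter> {x. x $ j > z} \<in> sets borel" using Split.prems(1) h2 by (rule sets.Int)
  have "B \<in> set (leaves l (R \<inter> {x. x $ j \<le> z})) \<or> B \<in> set (leaves r (R \<inter> {x. x $ j > z}))"
    using Split.prems(2) by simp
  then show ?case
  proof
    assume "B \<in> set (leaves l (R \<inter> {x. x $ j \<le> z}))"
    then show ?case by (rule Split.IH(1)[OF r1])
  next
    assume "B \<in> set (leaves r (R \<inter> {x. x $ j > z}))"
    then show ?case by (rule Split.IH(2)[OF r2])
  qed
qed

lemma Omega_borel: "Omega \<in> sets borel"
  unfolding Omega_def
  by (intro borel_closed closed_Collect_all closed_Collect_conj closed_Collect_le continuous_intros)

lemma leaf_bound:
  fixes M :: "'w measure" and Y :: "'w \<Rightarrow> real"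
  assumes P: "prob_space M" and Ym: "Y \<in> borel_measurable M"
    and Y01: "\<forall>w \<in> space M. Y w \<in> {0, 1}"
    and F: "F \<in> sets M" and G: "G \<in> sets M"
  defines "S \<equiv> \<lambda>H. (\<integral>w. indicator H w * Y w \<partial>M)"
  shows "abs (2 * S F * (measure M F - S F) / measure M F - 2 * S G * (measure M G - S G) / measure M G)
          \<le> 2 * measure M ((F - G) \<union> (G - F))"
proof -
  interpret prob_space M by (rule P)
  have Yi: "integrable M Y"
    using Y01 Ym by (intro integrable_const_bound[where B=1]) (auto intro!: AE_I2)
  have Ii: "integrable M (\<lambda>w. indicator H w * Y w)" if "H \<in> sets M" for H
    using integrable_real_mult_indicator[OF that Yi] by (simp add: mult.commute)
  have add: "S (H1 \<union> H2) = S H1 + S H2" if "H1 \<in> sets M" "H2 \<in> sets M" "H1 \<inter> H2 = {}" for H1 H2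
  proof -
    have "(\<lambda>w. indicator (H1 \<union> H2) w * Y w) = (\<lambda>w. indicator H1 w * Y w + indicator H2 w * Y w)"
      using that(3) by (auto simp: fun_eq_iff split: split_indicator)
    then show ?thesis unfolding S_def using Ii[OF that(1)] Ii[OF that(2)] by simp
  qed
  have iI: "integrable M (indicator H :: 'w \<Rightarrow> real)" if "H \<in> sets M" for H
  proof -
    have "H \<inter> space M = H" using sets.sets_into_space[OF that] by blast
    moreover have "emeasure M H < top" by (metis emeasure_finite less_top)
    ultimately show ?thesis using that by (simp add: integrable_indicator_iff)
  qed
  have bnd: "0 \<le> S H \<and> S H \<le> measure M H" if "H \<in> sets M" for H
  proof
    show "0 \<le> S H" unfolding S_def using Y01
      by (intro integral_nonneg_AE AE_I2) (auto split: split_indicator)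
    have "S H \<le> (\<integral>w. indicator H w \<partial>M)" unfolding S_def
      using Y01 Ii[OF that] that iI[OF that]
      by (intro integral_mono) (auto split: split_indicator)
    also have "\<dots> = measure M H" using Int_absorb2[OF sets.sets_into_space[OF that]] by simp
    finally show "S H \<le> measure M H" .
  qed
  define g where "g \<equiv> \<lambda>H. 2 * S H * (measure M H - S H) / measure M H"
  have step: "abs (g (C \<union> D) - g C) \<le> 2 * measure M D"
    if C: "C \<in> sets M" and D: "D \<in> sets M" and CD: "C \<inter> D = {}" for C D
  proof -
    have m: "measure M (C \<union> D) = measure M C + measure M D"
      using C D CD by (simp add: finite_measure_Union)
    have s: "S (C \<union> D) = S C + S D" using add C D CD by simp
    have "abs (2*(S C + S D)*((measure M C + measure M D)-(S C + S D))/(measure M C + measure M D)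
           - 2*S C*(measure M C - S C)/measure M C) \<le> 2*measure M D"
      using bnd[OF C] bnd[OF D] by (intro gkey) auto
    then show ?thesis unfolding g_def m s by simp
  qed
  have FG1: "(F \<inter> G) \<union> (F - G) = F" and FG2: "(F \<inter> G) \<union> (G - F) = G" by blast+
  have a1': "abs (g ((F \<inter> G) \<union> (F - G)) - g (F \<inter> G)) \<le> 2 * measure M (F - G)"
    using F G by (intro step) auto
  have a1: "abs (g F - g (F \<inter> G)) \<le> 2 * measure M (F - G)"
    using a1' by (simp only: FG1)
  have a2': "abs (g ((F \<inter> G) \<union> (G - F)) - g (F \<inter> G)) \<le> 2 * measure M (G - F)"
    using F G by (intro step) auto
  have a2: "abs (g G - g (F \<inter> G)) \<le> 2 * measure M (G - F)"
    using a2' by (simp only: FG2)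
  have m: "measure M ((F - G) \<union> (G - F)) = measure M (F - G) + measure M (G - F)"
    using F G by (intro finite_measure_Union) auto
  have gF: "g F = 2 * S F * (measure M F - S F) / measure M F" and gG: "g G = 2 * S G * (measure M G - S G) / measure M G"
    by (simp_all add: g_def)
  show ?thesis using a1 a2 m unfolding gF[symmetric] gG[symmetric] by linarith
qed

theorem mainTheorem1:
  fixes M :: "'w measure" and X :: "'w \<Rightarrow> real ^ 'd" and Y :: "'w \<Rightarrow> real"
    and T T' :: "'d ctree" and k :: nat and A A' :: "nat \<Rightarrow> (real ^ 'd) set"
    and \<epsilon> :: real
  assumes "prob_space M"
    and "X \<in> borel_measurable M" and "Y \<in> borel_measurable M"
    and "\<forall>w \<in> space M. X w \<in> Omega \<and> Y w \<in> {0, 1}"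
    and "mset (leaves T Omega) = mset (map A [0..<k])"
    and "mset (leaves T' Omega) = mset (map A' [0..<k])"
    and "\<epsilon> \<ge> 0"
    and "\<forall>j < k. PX M X (symdiff (A j) (A' j)) \<le> \<epsilon>"
  shows "\<bar>tree_impurity M X Y T - tree_impurity M X Y T'\<bar> \<le> 5 * real k * \<epsilon>"
proof -
  define E where "E \<equiv> \<lambda>B. {w \<in> space M. X w \<in> B}"
  define S where "S \<equiv> \<lambda>H. (\<integral>w. indicator H w * Y w \<partial>M)"
  define f where "f \<equiv> \<lambda>B. PX M X B * node_impurity M X Y B"
  have Em: "E B \<in> sets M" if "B \<in> sets borel" for B
  proof -
    have "E B = X -` B \<inter> space M" unfolding E_def by auto
    then show ?thesis using measurable_sets[OF assms(2) that] by simp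
  qed
  have fval: "f B = 2 * S (E B) * (measure M (E B) - S (E B)) / measure M (E B)" for B
  proof -
    have p: "PX M X B = measure M (E B)" unfolding PX_def E_def by simp
    have e: "eta M X Y B = S (E B) / measure M (E B)" unfolding eta_def S_def E_def PX_def by simp
    have gen: "a * (2 * (c / a) * (1 - c / a)) = 2 * c * (a - c) / a" for a c :: real
      by (cases "a = 0") (simp_all add: field_simps)
    show ?thesis unfolding f_def node_impurity_def p e by (rule gen)
  qed
  have Y01: "\<forall>w \<in> space M. Y w \<in> {0, 1}" using assms(4) by auto
  have fb: "abs (f B - f B') \<le> 2 * PX M X (symdiff B B')" if "B \<in> sets borel" "B' \<in> sets borel" for B B'
  proof -
    have "E (symdiff B B') = (E B - E B') \<union> (E B' - E B)" unfolding E_def symdiff_def by auto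
    then have "PX M X (symdiff B B') = measure M ((E B - E B') \<union> (E B' - E B))"
      unfolding PX_def E_def by simp
    moreover have "abs (f B - f B') \<le> 2 * measure M ((E B - E B') \<union> (E B' - E B))"
      unfolding fval S_def by (rule leaf_bound[OF assms(1) assms(3) Y01 Em[OF that(1)] Em[OF that(2)]])
    ultimately show ?thesis by linarith
  qed
  have sumT: "tree_impurity M X Y T = (\<Sum>j<k. f (A j))" if "mset (leaves T Omega) = mset (map A [0..<k])"
    for T :: "'d::finite ctree" and A
  proof -
    have "tree_impurity M X Y T = sum_list (map f (leaves T Omega))" unfolding tree_impurity_def f_def by simp
    also have "\<dots> = sum_mset (image_mset f (mset (leaves T Omega)))" by (simp add: sum_mset_sum_list[symmetric])
    also have "\<dots> = sum_mset (image_mset f (mset (map A [0..<k])))" using that by simp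
    also have "\<dots> = sum_list (map f (map A [0..<k]))" by (metis mset_map sum_mset_sum_list)
    also have "\<dots> = (\<Sum>j<k. f (A j))" by (simp add: sum_list_distinct_conv_sum_set atLeast0LessThan o_def)
    finally show ?thesis .
  qed
  have Ab: "A j \<in> sets borel" "A' j \<in> sets borel" if "j < k" for j
  proof -
    have "A j \<in> set (leaves T Omega)" using arg_cong[OF assms(5), of set_mset] that by auto
    then show "A j \<in> sets borel" using leaves_borel Omega_borel by blast
    have "A' j \<in> set (leaves T' Omega)" using arg_cong[OF assms(6), of set_mset] that by auto
    then show "A' j \<in> sets borel" using leaves_borel Omega_borel by blast
  qed
  have "\<bar>tree_impurity M X Y T - tree_impurity M X Y T'\<bar> = \<bar>\<Sum>j<k. f (A j) - f (A' j)\<bar>"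
    using sumT[OF assms(5)] sumT[OF assms(6)] by (simp add: sum_subtractf)
  also have "\<dots> \<le> (\<Sum>j<k. \<bar>f (A j) - f (A' j)\<bar>)" by (rule sum_abs)
  also have "\<dots> \<le> (\<Sum>j<k. 2 * \<epsilon>)"
  proof (rule sum_mono)
    fix j assume "j \<in> {..<k}"
    then have j: "j < k" by simp
    have "PX M X (symdiff (A j) (A' j)) \<le> \<epsilon>" using assms(8) j by blast
    then show "\<bar>f (A j) - f (A' j)\<bar> \<le> 2 * \<epsilon>" using fb[OF Ab[OF j]] by linarith
  qed
  also have "\<dots> = 2 * real k * \<epsilon>" by simp
  also have "\<dots> \<le> 5 * real k * \<epsilon>" using assms(7) by (simp add: mult_right_mono)
  finally show ?thesis .
qed

end
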